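(* Let $K$ be an infinite commutative domain of characteristic $p>0$ and let $R$ be an associative (not necessarily unital) $K$-algebra on which $K$ acts torsion-freely. Then the following are equivalent. (i) $(R,\cdot)$ satisfies a semigroup identity; (ii) $R$ satisfies a binomial identity; (iii) there exist $n\ge0$ and $\alpha_0,\dots,\alpha_n\in K$, not all zero, such that $\sum_{i=0}^n\alpha_i y^ixy^{n-i}=0$ for all $x,y\in R$; (iv) there exists $m\ge1$ such that $y^m e_m y^m=0$ for all $x,y\in R$.
   Context: A semigroup identity is $u=v$ where $u\ne v$ are words in the free semigroup on variables $x,y,x_3,\dots$, holding under all substitutions. A binomial identity is a nontrivial polynomial identity $\alpha_1u_1+\alpha_2u_2=0$ with $u_1,u_2$ monomials and $\alpha_1,\alpha_2\in K$. $[a,b]=ab-ba$, $e_1=[x,y]$, $e_{m+1}=[e_m,y]$. *)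

theory Defs
  imports Main "HOL.Modules"
begin

definition k_algebra :: "('k::comm_ring_1 \<Rightarrow> 'r::ring \<Rightarrow> 'r) \<Rightarrow> bool" where
  "k_algebra sc \<longleftrightarrow> module sc \<and>
     (\<forall>a x y. sc a (x * y) = sc a x * y \<and> sc a (x * y) = x * sc a y)"

definition torsion_free_action :: "('k::zero \<Rightarrow> 'r::zero \<Rightarrow> 'r) \<Rightarrow> bool" where
  "torsion_free_action sc \<longleftrightarrow> (\<forall>a x. sc a x = 0 \<longrightarrow> a = 0 \<or> x = 0)"

text \<open>Words of the free semigroup on variables x_0, x_1, ... are nonempty lists of
  variable indices; evaluation under a substitution f.\<close>
fun weval :: "(nat \<Rightarrow> 'r::times) \<Rightarrow> nat list \<Rightarrow> 'r" where
  "weval f [] = undefined"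
| "weval f [i] = f i"
| "weval f (i # j # w) = f i * weval f (j # w)"

definition satisfies_semigroup_identity :: "'r::times itself \<Rightarrow> bool" where
  "satisfies_semigroup_identity _ \<longleftrightarrow>
     (\<exists>u v. u \<noteq> [] \<and> v \<noteq> [] \<and> u \<noteq> v \<and>
        (\<forall>f :: nat \<Rightarrow> 'r. weval f u = weval f v))"

text \<open>Binomial identity a1 u1 + a2 u2 = 0, nontrivial as an element of the free
  (non-unital) associative K-algebra.\<close>
definition satisfies_binomial_identity ::
    "('k::comm_ring_1 \<Rightarrow> 'r::ring \<Rightarrow> 'r) \<Rightarrow> bool" where
  "satisfies_binomial_identity sc \<longleftrightarrow>
     (\<exists>a1 a2 u1 u2. u1 \<noteq> [] \<and> u2 \<noteq> [] \<and>
        (if u1 = u2 then a1 + a2 \<noteq> 0 else a1 \<noteq> 0 \<or> a2 \<noteq> 0) \<and>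
        (\<forall>f :: nat \<Rightarrow> 'r. sc a1 (weval f u1) + sc a2 (weval f u2) = 0))"

text \<open>lpow y i z = y^i z and rpow y i z = z y^i (with y^0 z = z, no unit needed).\<close>
definition lpow :: "'r::times \<Rightarrow> nat \<Rightarrow> 'r \<Rightarrow> 'r" where
  "lpow y i z = ((\<lambda>w. y * w) ^^ i) z"

definition rpow :: "'r::times \<Rightarrow> nat \<Rightarrow> 'r \<Rightarrow> 'r" where
  "rpow y i z = ((\<lambda>w. w * y) ^^ i) z"

definition comm :: "'r::ring \<Rightarrow> 'r \<Rightarrow> 'r" where
  "comm a b = a * b - b * a"

text \<open>e_m = [...[[x,y],y],...,y] (m brackets); ecomm x y 1 = [x,y].\<close>
definition ecomm :: "'r::ring \<Rightarrow> 'r \<Rightarrow> nat \<Rightarrow> 'r" where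
  "ecomm x y m = ((\<lambda>z. comm z y) ^^ m) x"

end

theory Submission
  imports Defs "HOL-Computational_Algebra.Computational_Algebra" "HOL-Algebra.Algebraic_Closure_Type"
begin

locale kalg =
  fixes sc :: "'k::idom \<Rightarrow> 'r::ring \<Rightarrow> 'r"
  assumes kalg: "k_algebra sc"
begin

sublocale Modules.module sc
  using kalg unfolding k_algebra_def by blast

lemma sc_mult_left: "sc a (x * y) = sc a x * y"
  using kalg unfolding k_algebra_def by blast

lemma sc_mult_right: "sc a (x * y) = x * sc a y"
  using kalg unfolding k_algebra_def by blast

definition Ev1 :: "'r \<Rightarrow> 'k poly \<Rightarrow> 'r \<Rightarrow> 'r" where
  "Ev1 y g x = fold_coeffs (\<lambda>c F. (\<lambda>z. sc c z + y * F z)) g (\<lambda>z. 0) x"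

lemma Ev1_0 [simp]: "Ev1 y 0 x = 0"
  by (simp add: Ev1_def)

lemma Ev1_pCons: "Ev1 y (pCons c g) x = sc c x + y * Ev1 y g x"
proof (cases "pCons c g = 0")
  case True
  then show ?thesis by (simp add: Ev1_def)
next
  case False
  then have "c \<noteq> 0 \<or> g \<noteq> 0" by auto
  then show ?thesis
    by (auto simp add: Ev1_def)
qed

definition Ev :: "'r \<Rightarrow> 'k poly poly \<Rightarrow> 'r \<Rightarrow> 'r" where
  "Ev y B x = fold_coeffs (\<lambda>g F. (\<lambda>z. Ev1 y g z + F z * y)) B (\<lambda>z. 0) x"

lemma Ev_0 [simp]: "Ev y 0 x = 0"
  by (simp add: Ev_def)

lemma Ev_pCons: "Ev y (pCons g B) x = Ev1 y g x + Ev y B x * y"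
proof (cases "pCons g B = 0")
  case True
  then show ?thesis by (simp add: Ev_def)
next
  case False
  then have "g \<noteq> 0 \<or> B \<noteq> 0" by auto
  then show ?thesis
    by (auto simp add: Ev_def)
qed

lemma Ev1_add_x: "Ev1 y g (x1 + x2) = Ev1 y g x1 + Ev1 y g x2"
  by (induct g) (simp_all add: Ev1_pCons scale_right_distrib distrib_left algebra_simps)

lemma Ev1_zero_x [simp]: "Ev1 y g 0 = 0"
  by (induct g) (simp_all add: Ev1_pCons)

lemma Ev1_minus_x: "Ev1 y g (- x) = - Ev1 y g x"
  by (induct g) (simp_all add: Ev1_pCons)

lemma Ev1_sc_x: "Ev1 y g (sc c x) = sc c (Ev1 y g x)"
  by (induct g) (simp_all add: Ev1_pCons scale_right_distrib sc_mult_right mult.commute)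

lemma Ev1_add: "Ev1 y (g1 + g2) x = Ev1 y g1 x + Ev1 y g2 x"
proof (induct g1 arbitrary: g2)
  case 0
  then show ?case by simp
next
  case (pCons a p)
  show ?case
  proof (cases g2 rule: pCons_cases)
    case (pCons b q)
    have "Ev1 y (p + q) x = Ev1 y p x + Ev1 y q x" by (rule pCons.hyps(2))
    then show ?thesis using \<open>g2 = pCons b q\<close>
      by (simp add: Ev1_pCons scale_left_distrib distrib_left algebra_simps)
  qed
qed

lemma Ev1_mult_right_x: "Ev1 y g (x * w) = Ev1 y g x * w"
  by (induct g) (simp_all add: Ev1_pCons sc_mult_left distrib_right mult.assoc)

lemma Ev1_mult_left_y: "Ev1 y g (y * x) = y * Ev1 y g x"
  by (induct g) (simp_all add: Ev1_pCons sc_mult_right distrib_left mult.assoc)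

lemma Ev1_smult: "Ev1 y (smult c g) x = sc c (Ev1 y g x)"
  by (induct g) (simp_all add: Ev1_pCons scale_right_distrib sc_mult_right)

lemma Ev1_mult: "Ev1 y (g1 * g2) x = Ev1 y g1 (Ev1 y g2 x)"
proof (induct g1)
  case 0
  then show ?case by simp
next
  case (pCons a p)
  have "pCons a p * g2 = smult a g2 + pCons 0 (p * g2)" by simp
  then show ?case using pCons.hyps(2)
    by (simp add: Ev1_pCons Ev1_add Ev1_smult)
qed

lemma Ev1_const: "Ev1 y [:c:] x = sc c x"
  by (simp add: Ev1_pCons)

lemma Ev1_X: "Ev1 y [:0, 1:] x = y * x"
  by (simp add: Ev1_pCons)

lemma Ev_add_x: "Ev y B (x1 + x2) = Ev y B x1 + Ev y B x2"
  by (induct B) (simp_all add: Ev_pCons Ev1_add_x distrib_right algebra_simps)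

lemma Ev_zero_x [simp]: "Ev y B 0 = 0"
  by (induct B) (simp_all add: Ev_pCons)

lemma Ev_minus_x: "Ev y B (- x) = - Ev y B x"
  by (induct B) (simp_all add: Ev_pCons Ev1_minus_x)

lemma Ev_sc_x: "Ev y B (sc c x) = sc c (Ev y B x)"
  by (induct B) (simp_all add: Ev_pCons Ev1_sc_x scale_right_distrib sc_mult_left)

lemma Ev_add: "Ev y (B1 + B2) x = Ev y B1 x + Ev y B2 x"
proof (induct B1 arbitrary: B2)
  case 0
  then show ?case by simp
next
  case (pCons a p)
  show ?case
  proof (cases B2 rule: pCons_cases)
    case (pCons b q)
    have "Ev y (p + q) x = Ev y p x + Ev y q x" by (rule pCons.hyps(2))
    then show ?thesis using \<open>B2 = pCons b q\<close>
      by (simp add: Ev_pCons Ev1_add distrib_right algebra_simps)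
  qed
qed

lemma Ev_minus: "Ev y (- B) x = - Ev y B x"
  using Ev_add[of y B "- B" x] by (simp add: add_eq_0_iff2)

lemma Ev_diff: "Ev y (B1 - B2) x = Ev y B1 x - Ev y B2 x"
  using Ev_add[of y B1 "- B2" x] by (simp add: Ev_minus)

lemma Ev_sum: "Ev y (\<Sum>i\<in>A. B i) x = (\<Sum>i\<in>A. Ev y (B i) x)"
  by (induct A rule: infinite_finite_induct) (simp_all add: Ev_add)

lemma Ev_mult_right_y: "Ev y B (x * y) = Ev y B x * y"
  by (induct B) (simp_all add: Ev_pCons Ev1_mult_right_x distrib_right)

lemma Ev_mult_left_y: "Ev y B (y * x) = y * Ev y B x"
  by (induct B) (simp_all add: Ev_pCons Ev1_mult_left_y distrib_left mult.assoc)

lemma Ev_smult: "Ev y (smult g C) x = Ev1 y g (Ev y C x)"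
  by (induct C) (simp_all add: Ev_pCons Ev1_mult Ev1_add_x Ev1_mult_right_x)

lemma Ev_mult: "Ev y (B * C) x = Ev y B (Ev y C x)"
proof (induct B)
  case 0
  then show ?case by simp
next
  case (pCons a p)
  have "pCons a p * C = smult a C + pCons 0 (p * C)" by simp
  then show ?case using pCons.hyps(2)
    by (simp add: Ev_pCons Ev_add Ev_smult)
qed

lemma Ev_const: "Ev y [:g:] x = Ev1 y g x"
  by (simp add: Ev_pCons)

lemma Ev_1: "Ev y 1 x = x"
  by (simp add: Ev_pCons Ev1_pCons one_pCons)

lemma Ev_T: "Ev y [:0, 1:] x = x * y"
  by (simp add: Ev_pCons Ev_1 flip: one_pCons)

lemma Ev_S: "Ev y [:[:0, 1:]:] x = y * x"
  by (simp add: Ev_const Ev1_X)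

lemma Ev_C: "Ev y [:[:c:]:] x = sc c x"
  by (simp add: Ev_const Ev1_const)

lemma Ev_power: "Ev y (B ^ n) x = ((\<lambda>z. Ev y B z) ^^ n) x"
  by (induct n) (simp_all add: Ev_mult Ev_1)

lemma lpow_Ev: "lpow y n x = Ev y ([:[:0, 1:]:] ^ n) x"
  by (simp add: lpow_def Ev_power Ev_S)

lemma rpow_Ev: "rpow y n x = Ev y ([:0, 1:] ^ n) x"
  by (simp add: rpow_def Ev_power Ev_T)

end

context kalg
begin

lemma Ev1_1: "Ev1 y 1 x = x"
  by (simp add: Ev1_pCons flip: pCons_one)

definition Sv :: "'k poly poly" where "Sv = [:[:0, 1:]:]"
definition Tv :: "'k poly poly" where "Tv = [:0, 1:]"

lemma Ev_Sv: "Ev y Sv x = y * x" by (simp add: Sv_def Ev_S)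
lemma Ev_Tv: "Ev y Tv x = x * y" by (simp add: Tv_def Ev_T)

lemma Ev1_power: "Ev1 y (g ^ n) x = ((\<lambda>z. Ev1 y g z) ^^ n) x"
  by (induct n) (simp_all add: Ev1_mult Ev1_1)

lemma Ev1_Xpow: "Ev1 y ([:0, 1:] ^ n) x = lpow y n x"
  by (simp add: lpow_def Ev1_power Ev1_X)

lemma Ev_monom: "Ev y (monom (monom c i) j) x = sc c (lpow y i (rpow y j x))"
proof -
  have "monom (monom c i) j = smult (monom c i) ([:0, 1:] ^ j)"
    by (simp add: monom_altdef)
  moreover have "monom c i = smult c ([:0, 1:] ^ i)"
    by (simp add: monom_altdef)
  ultimately show ?thesis
    by (simp add: Ev_smult Ev1_smult Ev1_Xpow rpow_Ev)
qed

definition HomF :: "nat \<Rightarrow> 'k poly \<Rightarrow> 'k poly poly" where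
  "HomF n h = (\<Sum>i\<le>n. monom (monom (coeff h i) i) (n - i))"

lemma Ev_HomF: "Ev y (HomF n h) x = (\<Sum>i\<le>n. sc (coeff h i) (lpow y i (rpow y (n - i) x)))"
  by (simp add: HomF_def Ev_sum Ev_monom)

lemma ecomm_Ev: "ecomm x y m = Ev y ((Tv - Sv) ^ m) x"
proof (induct m)
  case 0
  then show ?case by (simp add: ecomm_def Ev_1)
next
  case (Suc m)
  have "ecomm x y (Suc m) = comm (ecomm x y m) y"
    by (simp add: ecomm_def)
  also have "\<dots> = Ev y (Tv - Sv) (ecomm x y m)"
    by (simp add: comm_def Ev_diff Ev_Tv Ev_Sv)
  finally show ?case using Suc by (simp add: Ev_mult)
qed

end

context kalg
begin

definition substB :: "'k poly \<Rightarrow> 'k poly poly \<Rightarrow> 'k poly poly" where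
  "substB \<phi> B = pcompose (map_poly (\<lambda>g. pcompose g \<phi>) B) (map_poly (\<lambda>c. [:c:]) \<phi>)"

lemma Ev1_subst:
  assumes h1: "\<And>z. Ev1 y \<phi> z = y' * z"
  shows "Ev1 y' g x = Ev1 y (pcompose g \<phi>) x"
proof (induct g arbitrary: x)
  case 0
  then show ?case by simp
next
  case (pCons a p)
  have "pcompose (pCons a p) \<phi> = [:a:] + \<phi> * pcompose p \<phi>"
    by (rule pcompose_pCons)
  then show ?case using pCons(2)
    by (simp add: Ev1_pCons Ev1_add Ev1_mult Ev1_const h1)
qed

lemma Ev_subst:
  assumes h1: "\<And>z. Ev1 y \<phi> z = y' * z"
    and h2: "\<And>z. Ev y (map_poly (\<lambda>c. [:c:]) \<phi>) z = z * y'"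
  shows "Ev y' B x = Ev y (substB \<phi> B) x"
proof (induct B arbitrary: x)
  case 0
  then show ?case by (simp add: substB_def)
next
  case (pCons g B)
  have "substB \<phi> (pCons g B) = [:pcompose g \<phi>:] + map_poly (\<lambda>c. [:c:]) \<phi> * substB \<phi> B"
    by (simp add: substB_def map_poly_pCons pcompose_pCons)
  then show ?case using pCons(2)
    by (simp add: Ev_pCons Ev_add Ev_mult Ev_const h2 Ev1_subst[OF h1])
qed

lemma Ev_scale: "Ev (sc \<mu> y) B x = Ev y (substB [:0, \<mu>:] B) x"
proof (rule Ev_subst)
  show "Ev1 y [:0, \<mu>:] z = sc \<mu> y * z" for z
    by (simp add: Ev1_pCons sc_mult_right flip: sc_mult_left)
  show "Ev y (map_poly (\<lambda>c. [:c:]) [:0, \<mu>:]) z = z * sc \<mu> y" for z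
    by (simp add: map_poly_pCons Ev_pCons Ev1_pCons sc_mult_right flip: sc_mult_left)
qed

lemma Ev_sq: "Ev (sc l y + sc (l * l) (y * y)) B x = Ev y (substB [:0, l, l * l:] B) x"
proof (rule Ev_subst)
  show "Ev1 y [:0, l, l * l:] z = (sc l y + sc (l * l) (y * y)) * z" for z
    by (simp add: Ev1_pCons sc_mult_right distrib_left distrib_right mult.assoc flip: sc_mult_left)
  show "Ev y (map_poly (\<lambda>c. [:c:]) [:0, l, l * l:]) z = z * (sc l y + sc (l * l) (y * y))" for z
    by (simp add: map_poly_pCons Ev_pCons Ev1_pCons sc_mult_right
        distrib_left distrib_right mult.assoc flip: sc_mult_left)
qed

lemma coeff_coeff_substB_scale:
  "coeff (coeff (substB [:0, \<mu>:] B) j) i = \<mu> ^ (i + j) * coeff (coeff B j) i"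
proof -
  have m: "map_poly (\<lambda>c. [:c:]) [:0, \<mu>:] = [:0, [:\<mu>:]:]"
    by (simp add: map_poly_pCons)
  have "coeff (substB [:0, \<mu>:] B) j = [:\<mu>:] ^ j * coeff (map_poly (\<lambda>g. pcompose g [:0, \<mu>:]) B) j"
    unfolding substB_def m by (rule coeff_pcompose_linear)
  also have "\<dots> = smult (\<mu> ^ j) (pcompose (coeff B j) [:0, \<mu>:])"
    by (simp add: coeff_map_poly poly_const_pow)
  finally have "coeff (coeff (substB [:0, \<mu>:] B) j) i = \<mu> ^ j * coeff (pcompose (coeff B j) [:0, \<mu>:]) i"
    by simp
  also have "\<dots> = \<mu> ^ j * (\<mu> ^ i * coeff (coeff B j) i)"
    by (simp add: coeff_pcompose_linear)
  finally show ?thesis by (simp add: power_add mult_ac)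
qed

lemma coeff_coeff_HomF:
  "coeff (coeff (HomF k h) j) i = (if i \<le> k \<and> j = k - i then coeff h i else 0)"
proof -
  have "coeff (coeff (HomF k h) j) i = (\<Sum>i'\<le>k. coeff (coeff (monom (monom (coeff h i') i') (k - i')) j) i)"
    by (simp add: HomF_def coeff_sum)
  also have "\<dots> = (\<Sum>i'\<le>k. if i' = i then (if k - i' = j then coeff h i' else 0) else 0)"
    by (rule sum.cong) (auto simp: coeff_monom)
  also have "\<dots> = (if i \<le> k \<and> j = k - i then coeff h i else 0)"
    by (simp add: sum.delta)
  finally show ?thesis .
qed

definition dehk :: "nat \<Rightarrow> 'k poly poly \<Rightarrow> 'k poly" where
  "dehk k B = (\<Sum>i\<le>k. monom (coeff (coeff B (k - i)) i) i)"

lemma coeff_dehk: "coeff (dehk k B) i = (if i \<le> k then coeff (coeff B (k - i)) i else 0)"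
  by (simp add: dehk_def coeff_sum coeff_monom)

end

locale kalg_tf = kalg sc for sc :: "'k::idom \<Rightarrow> 'r::ring \<Rightarrow> 'r" +
  assumes tf: "torsion_free_action sc"
begin

lemma tf_cancel: "sc a x = 0 \<Longrightarrow> a \<noteq> 0 \<Longrightarrow> x = 0"
  using tf unfolding torsion_free_action_def by blast

lemma vander_step:
  "(\<Sum>e\<le>Suc N. sc (\<mu> ^ e) (c e)) - (\<Sum>e\<le>Suc N. sc (\<mu>0 ^ e) (c e)) =
   sc (\<mu> - \<mu>0) (\<Sum>k\<le>N. sc (\<mu> ^ k) (\<Sum>e\<in>{Suc k..Suc N}. sc (\<mu>0 ^ (e - Suc k)) (c e)))"
proof -
  have "(\<Sum>e\<le>Suc N. sc (\<mu> ^ e) (c e)) - (\<Sum>e\<le>Suc N. sc (\<mu>0 ^ e) (c e)) =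
        (\<Sum>e\<le>Suc N. sc (\<mu> ^ e - \<mu>0 ^ e) (c e))"
    by (simp add: sum_subtractf scale_left_diff_distrib)
  also have "\<dots> = (\<Sum>e\<le>Suc N. sc (\<mu> - \<mu>0) (\<Sum>k<e. sc (\<mu> ^ k) (sc (\<mu>0 ^ (e - Suc k)) (c e))))"
    by (rule sum.cong) (simp_all add: power_diff_sumr2 sum_distrib_left scale_sum_left scale_sum_right mult_ac)
  also have "\<dots> = sc (\<mu> - \<mu>0) (\<Sum>e\<le>Suc N. \<Sum>k<e. sc (\<mu> ^ k) (sc (\<mu>0 ^ (e - Suc k)) (c e)))"
    by (rule scale_sum_right[symmetric])
  also have "(\<Sum>e\<le>Suc N. \<Sum>k<e. sc (\<mu> ^ k) (sc (\<mu>0 ^ (e - Suc k)) (c e))) =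
     (\<Sum>k<Suc N. \<Sum>e\<in>{Suc k..Suc N}. sc (\<mu> ^ k) (sc (\<mu>0 ^ (e - Suc k)) (c e)))"
    by (rule sum.nested_swap')
  also have "\<dots> = (\<Sum>k\<le>N. sc (\<mu> ^ k) (\<Sum>e\<in>{Suc k..Suc N}. sc (\<mu>0 ^ (e - Suc k)) (c e)))"
    by (simp only: lessThan_Suc_atMost scale_sum_right)
  finally show ?thesis .
qed

lemma vander_gen:
  assumes "infinite A" "\<forall>\<mu>\<in>A. (\<Sum>k\<le>N. sc (\<mu> ^ k) (c k)) = 0" "k \<le> N"
  shows "c k = 0"
  using assms
proof (induct N arbitrary: c A k)
  case 0
  from infinite_imp_nonempty[OF 0(1)] obtain \<mu> where "\<mu> \<in> A" by blast
  with 0 have "(\<Sum>k\<le>0. sc (\<mu> ^ k) (c k)) = 0" by blast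
  with 0(3) show ?case by simp
next
  case (Suc N)
  from infinite_imp_nonempty[OF Suc.prems(1)] obtain \<mu>0 where m0: "\<mu>0 \<in> A" by blast
  define d where "d k = (\<Sum>e\<in>{Suc k..Suc N}. sc (\<mu>0 ^ (e - Suc k)) (c e))" for k
  have A': "infinite (A - {\<mu>0})" using Suc.prems(1) by simp
  have "\<forall>\<mu>\<in>A - {\<mu>0}. (\<Sum>k\<le>N. sc (\<mu> ^ k) (d k)) = 0"
  proof
    fix \<mu> assume "\<mu> \<in> A - {\<mu>0}"
    then have "\<mu> \<in> A" "\<mu> \<noteq> \<mu>0" by auto
    have e1: "(\<Sum>e\<le>Suc N. sc (\<mu> ^ e) (c e)) = 0" using Suc.prems(2) \<open>\<mu> \<in> A\<close> by blast
    have e2: "(\<Sum>e\<le>Suc N. sc (\<mu>0 ^ e) (c e)) = 0" using Suc.prems(2) m0 by blast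
    have "sc (\<mu> - \<mu>0) (\<Sum>k\<le>N. sc (\<mu> ^ k) (d k)) =
      (\<Sum>e\<le>Suc N. sc (\<mu> ^ e) (c e)) - (\<Sum>e\<le>Suc N. sc (\<mu>0 ^ e) (c e))"
      unfolding d_def by (rule vander_step[symmetric])
    also have "\<dots> = 0" using e1 e2 by simp
    finally have "sc (\<mu> - \<mu>0) (\<Sum>k\<le>N. sc (\<mu> ^ k) (d k)) = 0" .
    then show "(\<Sum>k\<le>N. sc (\<mu> ^ k) (d k)) = 0"
      using \<open>\<mu> \<noteq> \<mu>0\<close> tf_cancel by auto
  qed
  then have dz: "\<And>k. k \<le> N \<Longrightarrow> d k = 0"
    using Suc.hyps[OF A'] by blast
  have "d N = c (Suc N)" by (simp add: d_def)
  then have cN: "c (Suc N) = 0" using dz by simp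
  have "\<forall>\<mu>\<in>A. (\<Sum>k\<le>N. sc (\<mu> ^ k) (c k)) = 0"
    using Suc.prems(2) cN by simp
  then have "\<And>k. k \<le> N \<Longrightarrow> c k = 0"
    using Suc.hyps[OF Suc.prems(1)] by blast
  then show ?case using cN Suc.prems(3) by (cases "k = Suc N") auto
qed

end

context kalg
begin

lemma coeff_comp_sum:
  assumes bound: "\<And>i j. coeff (coeff B j) i \<noteq> 0 \<Longrightarrow> i + j \<le> N"
  shows "coeff (coeff (\<Sum>k\<le>N. smult [:\<mu> ^ k:] (HomF k (dehk k B))) j) i = \<mu> ^ (i + j) * coeff (coeff B j) i"
proof -
  have "coeff (coeff (\<Sum>k\<le>N. smult [:\<mu> ^ k:] (HomF k (dehk k B))) j) i =
        (\<Sum>k\<le>N. \<mu> ^ k * coeff (coeff (HomF k (dehk k B)) j) i)"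
    by (simp add: coeff_sum)
  also have "\<dots> = (\<Sum>k\<le>N. if k = i + j then \<mu> ^ (i + j) * coeff (coeff B j) i else 0)"
    by (rule sum.cong) (auto simp: coeff_coeff_HomF coeff_dehk)
  also have "\<dots> = (if i + j \<le> N then \<mu> ^ (i + j) * coeff (coeff B j) i else 0)"
    by (simp add: sum.delta)
  also have "\<dots> = \<mu> ^ (i + j) * coeff (coeff B j) i"
    using bound[of j i] by auto
  finally show ?thesis .
qed

definition totdeg :: "'k poly poly \<Rightarrow> nat" where
  "totdeg B = degree B + (\<Sum>j\<le>degree B. degree (coeff B j))"

lemma totdeg_bound: "coeff (coeff B j) i \<noteq> 0 \<Longrightarrow> i + j \<le> totdeg B"
proof -
  assume a: "coeff (coeff B j) i \<noteq> 0"
  then have "coeff B j \<noteq> 0" by auto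
  then have j: "j \<le> degree B" by (rule le_degree)
  have "i \<le> degree (coeff B j)" using a by (rule le_degree)
  also have "\<dots> \<le> (\<Sum>j\<le>degree B. degree (coeff B j))"
    using j by (intro member_le_sum) auto
  finally show ?thesis using j unfolding totdeg_def by simp
qed

lemma comp_decomp: "B = (\<Sum>k\<le>totdeg B. HomF k (dehk k B))"
proof -
  have "\<And>j i. coeff (coeff (\<Sum>k\<le>totdeg B. smult [:1 ^ k:] (HomF k (dehk k B))) j) i = coeff (coeff B j) i"
    using coeff_comp_sum[of B "totdeg B" 1] totdeg_bound by simp
  then have "B = (\<Sum>k\<le>totdeg B. smult [:1 ^ k:] (HomF k (dehk k B)))"
    by (intro poly_eqI) simp
  then show ?thesis by (simp add: pCons_one)
qed

lemma substB_scale_decomp: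
  "substB [:0, \<mu>:] B = (\<Sum>k\<le>totdeg B. smult [:\<mu> ^ k:] (HomF k (dehk k B)))"
  by (intro poly_eqI) (simp add: coeff_comp_sum totdeg_bound coeff_coeff_substB_scale)

lemma Ev_scale_decomp:
  "Ev (sc \<mu> y) B x = (\<Sum>k\<le>totdeg B. sc (\<mu> ^ k) (Ev y (HomF k (dehk k B)) x))"
  by (simp add: Ev_scale substB_scale_decomp Ev_sum Ev_smult Ev1_const)

definition annB :: "'k poly poly \<Rightarrow> bool" where
  "annB B \<longleftrightarrow> (\<forall>x y. Ev y B x = 0)"

lemma annB_mult: "annB B \<Longrightarrow> annB (C * B)"
  by (simp add: annB_def Ev_mult)

lemma annB_add: "annB B1 \<Longrightarrow> annB B2 \<Longrightarrow> annB (B1 + B2)"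
  by (simp add: annB_def Ev_add)

lemma dehk_add: "dehk k (B1 + B2) = dehk k B1 + dehk k B2"
  by (rule poly_eqI) (simp add: coeff_dehk)

lemma dehk_T: "dehk (Suc k) (Tv * B) = dehk k B"
proof (rule poly_eqI)
  fix i
  have tb: "Tv * B = pCons 0 B" by (simp add: Tv_def)
  show "coeff (dehk (Suc k) (Tv * B)) i = coeff (dehk k B) i"
    unfolding tb coeff_dehk
    by (cases "i \<le> k") (auto simp: coeff_pCons Suc_diff_le split: nat.split)
qed

lemma dehk_Tpow: "dehk (k + j) (Tv ^ j * B) = dehk k B"
  by (induct j) (simp_all add: dehk_T mult.assoc)

lemma dehk_S: "dehk (Suc k) (Sv * B) = pCons 0 (dehk k B)"
proof (rule poly_eqI)
  fix i
  have sb: "coeff (Sv * B) j = pCons 0 (coeff B j)" for j by (simp add: Sv_def)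
  show "coeff (dehk (Suc k) (Sv * B)) i = coeff (pCons 0 (dehk k B)) i"
    unfolding coeff_dehk sb
    by (cases i) (auto simp: coeff_pCons coeff_dehk)
qed

lemma dehk_C: "dehk k (smult [:c:] B) = smult c (dehk k B)"
  by (rule poly_eqI) (simp add: coeff_dehk)

lemma dehk_0: "dehk k 0 = 0"
  by (simp add: dehk_def)

definition Dset :: "'k poly set" where
  "Dset = {h. \<exists>B k. annB B \<and> h = dehk k B}"

lemma Dset_add: "h1 \<in> Dset \<Longrightarrow> h2 \<in> Dset \<Longrightarrow> h1 + h2 \<in> Dset"
proof -
  assume "h1 \<in> Dset" "h2 \<in> Dset"
  then obtain B1 k1 B2 k2 where b: "annB B1" "h1 = dehk k1 B1" "annB B2" "h2 = dehk k2 B2"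
    unfolding Dset_def by blast
  have "h1 = dehk (k1 + k2) (Tv ^ k2 * B1)" using b by (simp add: dehk_Tpow)
  moreover have "h2 = dehk (k1 + k2) (Tv ^ k1 * B2)" using b dehk_Tpow[of k2 k1 B2] by (simp add: add.commute)
  ultimately have "h1 + h2 = dehk (k1 + k2) (Tv ^ k2 * B1 + Tv ^ k1 * B2)" by (simp add: dehk_add)
  moreover have "annB (Tv ^ k2 * B1 + Tv ^ k1 * B2)" using b by (simp add: annB_add annB_mult)
  ultimately show ?thesis unfolding Dset_def by blast
qed

lemma Dset_smult: "h \<in> Dset \<Longrightarrow> smult c h \<in> Dset"
proof -
  assume "h \<in> Dset"
  then obtain B k where b: "annB B" "h = dehk k B" unfolding Dset_def by blast
  then have "smult c h = dehk k (smult [:c:] B)" by (simp add: dehk_C)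
  moreover have "annB (smult [:c:] B)" using annB_mult[OF b(1), of "[:[:c:]:]"] by simp
  ultimately show ?thesis unfolding Dset_def by blast
qed

lemma Dset_X: "h \<in> Dset \<Longrightarrow> pCons 0 h \<in> Dset"
proof -
  assume "h \<in> Dset"
  then obtain B k where b: "annB B" "h = dehk k B" unfolding Dset_def by blast
  then have "pCons 0 h = dehk (Suc k) (Sv * B)" by (simp add: dehk_S)
  moreover have "annB (Sv * B)" using b(1) by (rule annB_mult)
  ultimately show ?thesis unfolding Dset_def by blast
qed

lemma Dset_mult: "h \<in> Dset \<Longrightarrow> q * h \<in> Dset"
proof (induct q)
  case 0
  have "annB 0" by (simp add: annB_def)
  then show ?case unfolding Dset_def using dehk_0 by auto
next
  case (pCons a p)
  have "pCons a p * h = smult a h + pCons 0 (p * h)" by simp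
  then show ?case using pCons by (simp add: Dset_add Dset_smult Dset_X)
qed

lemma Dset_diff: "h1 \<in> Dset \<Longrightarrow> h2 \<in> Dset \<Longrightarrow> h1 - h2 \<in> Dset"
  using Dset_add[of h1 "smult (-1) h2"] Dset_smult[of h2 "-1"] by simp

end

locale kalg_inf = kalg_tf sc for sc :: "'k::idom \<Rightarrow> 'r::ring \<Rightarrow> 'r" +
  assumes inf: "infinite (UNIV :: 'k set)"
begin

lemma annB_comp: "annB B \<Longrightarrow> annB (HomF k (dehk k B))"
proof (cases "k \<le> totdeg B")
  case True
  assume a: "annB B"
  show ?thesis unfolding annB_def
  proof (intro allI)
    fix x y
    have "\<forall>\<mu>\<in>UNIV. (\<Sum>k\<le>totdeg B. sc (\<mu> ^ k) (Ev y (HomF k (dehk k B)) x)) = 0"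
      using a by (simp add: annB_def flip: Ev_scale_decomp)
    then show "Ev y (HomF k (dehk k B)) x = 0"
      using vander_gen[OF inf _ True] by metis
  qed
next
  case False
  have "coeff (coeff B (k - n)) n = 0" if "n \<le> k" for n
  proof (rule ccontr)
    assume "coeff (coeff B (k - n)) n \<noteq> 0"
    then have "n + (k - n) \<le> totdeg B" by (rule totdeg_bound)
    then show False using False that by simp
  qed
  then have "dehk k B = 0"
    by (intro poly_eqI) (auto simp: coeff_dehk)
  then show ?thesis by (simp add: annB_def HomF_def)
qed

end

definition iota :: "'k::idom \<Rightarrow> 'k fract alg_closure" where
  "iota c = to_ac (to_fract c)"

lemma iota_0 [simp]: "iota 0 = 0" and iota_1 [simp]: "iota 1 = 1"
  and iota_add [simp]: "iota (a + b) = iota a + iota b"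
  and iota_mult [simp]: "iota (a * b) = iota a * iota b"
  and iota_uminus [simp]: "iota (- a) = - iota a"
  and iota_diff [simp]: "iota (a - b) = iota a - iota b"
  and iota_eq_iff [simp]: "iota a = iota b \<longleftrightarrow> a = b"
  and iota_eq_0_iff [simp]: "iota a = 0 \<longleftrightarrow> a = 0"
  by (simp_all add: iota_def)

lemma iota_power [simp]: "iota (a ^ n) = iota a ^ n"
  by (induct n) simp_all

definition mpi :: "'k::idom poly \<Rightarrow> 'k fract alg_closure poly" where
  "mpi p = map_poly iota p"

lemma coeff_mpi [simp]: "coeff (mpi p) i = iota (coeff p i)"
  by (simp add: mpi_def coeff_map_poly)

lemma mpi_add [simp]: "mpi (p + q) = mpi p + mpi q"
  by (rule poly_eqI) simp

lemma mpi_smult [simp]: "mpi (smult c p) = smult (iota c) (mpi p)"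
  by (rule poly_eqI) simp

lemma mpi_pCons [simp]: "mpi (pCons c p) = pCons (iota c) (mpi p)"
  by (rule poly_eqI) (simp add: coeff_pCons split: nat.split)

lemma mpi_0 [simp]: "mpi 0 = 0"
  by (simp add: mpi_def)

lemma mpi_1 [simp]: "mpi 1 = 1"
  by (simp add: mpi_def)

lemma mpi_mult [simp]: "mpi (p * q) = mpi p * mpi q"
  by (induct p) simp_all

lemma mpi_power [simp]: "mpi (p ^ n) = mpi p ^ n"
  by (induct n) simp_all

lemma mpi_inj: "mpi p = mpi q \<Longrightarrow> p = q"
  by (metis coeff_mpi iota_eq_iff poly_eqI)

lemma degree_mpi [simp]: "degree (mpi g) = degree g"
  unfolding mpi_def by (rule degree_map_poly) simp

lemma mpi_eq_0_iff [simp]: "mpi p = 0 \<longleftrightarrow> p = 0"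
  using mpi_inj[of p 0] by auto

definition ev1 :: "'k fract alg_closure \<Rightarrow> 'k::idom poly \<Rightarrow> 'k fract alg_closure" where
  "ev1 a g = poly (mpi g) a"

lemma ev1_pCons [simp]: "ev1 a (pCons c g) = iota c + a * ev1 a g"
  by (simp add: ev1_def)

lemma ev1_0 [simp]: "ev1 a 0 = 0"
  by (simp add: ev1_def)

lemma ev1_add [simp]: "ev1 a (p + q) = ev1 a p + ev1 a q"
  by (simp add: ev1_def)

lemma ev1_mult [simp]: "ev1 a (p * q) = ev1 a p * ev1 a q"
  by (simp add: ev1_def)

lemma ev1_smult [simp]: "ev1 a (smult c p) = iota c * ev1 a p"
  by (simp add: ev1_def)

lemma ev1_pcompose: "ev1 a (pcompose g \<phi>) = ev1 (ev1 a \<phi>) g"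
  by (induct g) (simp_all add: pcompose_pCons)

lemma ev1_monom: "ev1 a (monom c i) = iota c * a ^ i"
  by (induct i) (simp_all add: monom_Suc monom_0)

lemma ev1_sum_bound:
  assumes "degree g \<le> k"
  shows "ev1 a g = (\<Sum>i\<le>k. iota (coeff g i) * a ^ i)"
proof -
  have "ev1 a g = (\<Sum>i\<le>degree (mpi g). coeff (mpi g) i * a ^ i)"
    by (simp add: ev1_def poly_altdef)
  also have "\<dots> = (\<Sum>i\<le>k. coeff (mpi g) i * a ^ i)"
  proof (rule sum.mono_neutral_left)
    show "{..degree (mpi g)} \<subseteq> {..k}" using assms by auto
    show "\<forall>i\<in>{..k} - {..degree (mpi g)}. coeff (mpi g) i * a ^ i = 0"
      by (auto simp del: coeff_mpi intro!: coeff_eq_0)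
  qed simp
  finally show ?thesis by simp
qed

definition evalB :: "'k fract alg_closure \<Rightarrow> 'k fract alg_closure \<Rightarrow> 'k::idom poly poly \<Rightarrow> 'k fract alg_closure" where
  "evalB a b B = poly (map_poly (ev1 a) B) b"

lemma evalB_pCons [simp]: "evalB a b (pCons g B) = ev1 a g + b * evalB a b B"
  by (simp add: evalB_def map_poly_pCons)

lemma evalB_0 [simp]: "evalB a b 0 = 0"
  by (simp add: evalB_def)

lemma evalB_add [simp]: "evalB a b (B1 + B2) = evalB a b B1 + evalB a b B2"
proof (induct B1 arbitrary: B2)
  case 0
  then show ?case by simp
next
  case (pCons g p)
  show ?case
  proof (cases B2 rule: pCons_cases)
    case (pCons h q)
    have "evalB a b (p + q) = evalB a b p + evalB a b q" by (rule pCons.hyps(2))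
    then show ?thesis using \<open>B2 = pCons h q\<close> by (simp add: algebra_simps)
  qed
qed

lemma evalB_smult [simp]: "evalB a b (smult g B) = ev1 a g * evalB a b B"
  by (induct B) (simp_all add: algebra_simps)

lemma evalB_mult [simp]: "evalB a b (B * C) = evalB a b B * evalB a b C"
  by (induct B) (simp_all add: algebra_simps)

lemma evalB_sum: "evalB a b (\<Sum>i\<in>A. f i) = (\<Sum>i\<in>A. evalB a b (f i))"
  by (induct A rule: infinite_finite_induct) simp_all

lemma evalB_monom: "evalB a b (monom g j) = ev1 a g * b ^ j"
  by (induct j) (simp_all add: monom_Suc monom_0)

lemma evalB_pcompose:
  "evalB a b (pcompose B (map_poly (\<lambda>c. [:c:]) \<phi>)) = poly (map_poly (ev1 a) B) (ev1 b \<phi>)"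
proof (induct B)
  case 0
  then show ?case by simp
next
  case (pCons g B)
  have e: "evalB a b (map_poly (\<lambda>c. [:c:]) \<phi>) = ev1 b \<phi>"
    by (induct \<phi>) (simp_all add: map_poly_pCons)
  show ?case using pCons(2)
    by (simp add: pcompose_pCons map_poly_pCons e)
qed

context kalg
begin

lemma evalB_substB: "evalB a b (substB \<phi> B) = evalB (ev1 a \<phi>) (ev1 b \<phi>) B"
proof -
  have "map_poly (ev1 a) (map_poly (\<lambda>g. pcompose g \<phi>) B) = map_poly (ev1 (ev1 a \<phi>)) B"
    by (simp add: map_poly_map_poly o_def ev1_pcompose)
  moreover have "evalB a b (substB \<phi> B) = poly (map_poly (ev1 a) (map_poly (\<lambda>g. pcompose g \<phi>) B)) (ev1 b \<phi>)"
    unfolding substB_def by (rule evalB_pcompose)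
  ultimately show ?thesis
    by (simp add: evalB_def)
qed

lemma evalB_HomF: "evalB a b (HomF n h) = (\<Sum>i\<le>n. iota (coeff h i) * a ^ i * b ^ (n - i))"
  by (simp add: HomF_def evalB_sum evalB_monom ev1_monom)

end

context kalg
begin

lemma HomF_add: "HomF k (p + q) = HomF k p + HomF k q"
  by (intro poly_eqI) (simp add: coeff_coeff_HomF)

lemma HomF_smult: "HomF k (smult c p) = smult [:c:] (HomF k p)"
  by (intro poly_eqI) (simp add: coeff_coeff_HomF)

lemma HomF_zero: "HomF k 0 = 0"
  by (simp add: HomF_def)

lemma HomF_const0: "HomF 0 [:c:] = [:[:c:]:]"
  by (simp add: HomF_def monom_0)

lemma HomF_T:
  assumes "degree h \<le> k"
  shows "HomF (Suc k) h = Tv * HomF k h"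
proof (intro poly_eqI)
  fix j i
  have tc: "Tv * C = pCons 0 C" for C :: "'k poly poly" by (simp add: Tv_def)
  have hi: "coeff h (Suc k) = 0" using assms by (intro coeff_eq_0) simp
  show "coeff (coeff (HomF (Suc k) h) j) i = coeff (coeff (Tv * HomF k h) j) i"
    unfolding tc coeff_coeff_HomF
    using hi by (cases j) (auto simp: coeff_coeff_HomF le_Suc_eq Suc_diff_le)
qed

lemma HomF_S: "HomF (Suc k) (pCons 0 h) = Sv * HomF k h"
proof (intro poly_eqI)
  fix j i
  have sc': "coeff (Sv * C) j = pCons 0 (coeff C j)" for C :: "'k poly poly" and j by (simp add: Sv_def)
  show "coeff (coeff (HomF (Suc k) (pCons 0 h)) j) i = coeff (coeff (Sv * HomF k h) j) i"
    unfolding sc' coeff_coeff_HomF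
    by (cases i) (auto simp: coeff_coeff_HomF coeff_pCons)
qed

lemma HomF_Tpow:
  assumes "degree h \<le> k"
  shows "HomF (k + j) h = Tv ^ j * HomF k h"
  using assms by (induct j) (simp_all add: HomF_T mult.assoc)

lemma HomF_mult:
  assumes "degree q \<le> j" "degree h \<le> k"
  shows "HomF (j + k) (q * h) = HomF j q * HomF k h"
  using assms(1)
proof (induct j arbitrary: q)
  case 0
  then have q: "q = [:coeff q 0:]" by (metis degree_0_id le_zero_eq)
  show ?case
    by (subst (1 2) q) (simp add: HomF_smult HomF_const0)
next
  case (Suc j')
  obtain c q' where q: "q = pCons c q'" by (cases q rule: pCons_cases)
  have dq': "degree q' \<le> j'" using Suc.prems q by (cases "q' = 0") auto
  have dq'h: "degree (q' * h) \<le> j' + k"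
    using dq' assms(2) degree_mult_le[of q' h] by simp
  have e1: "q * h = smult c h + pCons 0 (q' * h)" by (simp add: q)
  have e2: "q = [:c:] + pCons 0 q'" by (simp add: q)
  have "HomF (Suc j' + k) (smult c h) = smult [:c:] (Tv ^ Suc j' * HomF k h)"
    using HomF_Tpow[OF assms(2), of "Suc j'"] by (simp add: HomF_smult add.commute)
  moreover have "HomF (Suc j' + k) (pCons 0 (q' * h)) = Sv * (HomF j' q' * HomF k h)"
    using HomF_S[of "j' + k" "q' * h"] Suc.hyps[OF dq'] by simp
  moreover have "HomF (Suc j') [:c:] = Tv ^ Suc j' * [:[:c:]:]"
    using HomF_Tpow[of "[:c:]" 0 "Suc j'"] by (simp add: HomF_const0)
  moreover have "HomF (Suc j') (pCons 0 q') = Sv * HomF j' q'"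
    by (rule HomF_S)
  ultimately have "HomF (Suc j' + k) (q * h) = smult [:c:] (Tv ^ Suc j' * HomF k h) + Sv * (HomF j' q' * HomF k h)"
    and "HomF (Suc j') ([:c:] + pCons 0 q') = Tv ^ Suc j' * [:[:c:]:] + Sv * HomF j' q'"
    unfolding e1 by (simp_all only: HomF_add)
  then show ?case
    unfolding e2[symmetric]
    by (simp add: distrib_right mult.assoc mult.left_commute)
qed

end

lemma alg_closed_01:
  fixes p :: "'a::alg_closed_field poly"
  assumes "p \<noteq> 0" "\<And>x. poly p x = 0 \<Longrightarrow> x = 0 \<or> x = 1"
  shows "\<exists>a b. p = smult (lead_coeff p) ([:0, 1:] ^ a * [:-1, 1:] ^ b)"
  using assms
proof (induct "degree p" arbitrary: p rule: less_induct)
  case less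
  show ?case
  proof (cases "degree p = 0")
    case True
    then have "p = [:lead_coeff p:]" by (metis degree_0_id)
    then have "p = smult (lead_coeff p) ([:0, 1:] ^ 0 * [:-1, 1:] ^ 0)"
      by (metis mult_1 power_0 smult_one)
    then show ?thesis by blast
  next
    case False
    then obtain r where r: "poly p r = 0" using alg_closed_imp_poly_has_root by blast
    then have "[:-r, 1:] dvd p" by (simp add: poly_eq_0_iff_dvd)
    then obtain q where pq: "p = [:-r, 1:] * q" by (elim dvdE)
    have q0: "q \<noteq> 0" using less.prems(1) pq by auto
    have "degree ([:-r, 1:] * q) = degree [:-r, 1:] + degree q" by (rule degree_mult_eq) (use q0 in auto)
    then have dq: "degree p = Suc (degree q)" using pq by simp
    have "\<And>x. poly q x = 0 \<Longrightarrow> x = 0 \<or> x = 1"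
      using less.prems(2) pq by (metis mult_zero_right poly_mult)
    then obtain a b where ab: "q = smult (lead_coeff q) ([:0, 1:] ^ a * [:-1, 1:] ^ b)"
      using less.hyps[of q] dq q0 by auto
    have "lead_coeff ([:-r, 1:] * q) = lead_coeff [:-r, 1:] * lead_coeff q" by (rule lead_coeff_mult)
    then have lc: "lead_coeff p = lead_coeff q" using pq by simp
    have pe: "p = smult (lead_coeff q) ([:-r, 1:] * ([:0, 1:] ^ a * [:-1, 1:] ^ b))"
      by (subst pq, subst ab, simp only: mult_smult_right)
    have "r = 0 \<or> r = 1" using less.prems(2) r by blast
    then show ?thesis
    proof
      assume "r = 0"
      then have "p = smult (lead_coeff p) ([:0, 1:] ^ Suc a * [:-1, 1:] ^ b)"
        using pe lc by (simp only: minus_zero power_Suc mult.assoc)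
      then show ?thesis by blast
    next
      assume "r = 1"
      then have "p = smult (lead_coeff p) ([:0, 1:] ^ a * [:-1, 1:] ^ Suc b)"
        using pe lc by (simp only: power_Suc mult.left_commute)
      then show ?thesis by blast
    qed
  qed
qed

context kalg
begin

lemma degree_dehk: "degree (dehk k B) \<le> k"
  by (rule degree_le) (simp add: coeff_dehk)

lemma dehk_HomF:
  assumes "degree h \<le> k"
  shows "dehk k (HomF k h) = h"
proof (intro poly_eqI)
  fix n
  show "coeff (dehk k (HomF k h)) n = coeff h n"
  proof (cases "n \<le> k")
    case False
    then have "coeff h n = 0" using assms by (intro coeff_eq_0) simp
    then show ?thesis using False by (simp add: coeff_dehk)
  qed (simp add: coeff_dehk coeff_coeff_HomF)
qed

lemma evalB_decomp: "evalB a 1 B = (\<Sum>k\<le>totdeg B. ev1 a (dehk k B))"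
proof -
  have "evalB a 1 B = evalB a 1 (\<Sum>k\<le>totdeg B. HomF k (dehk k B))"
    by (rule arg_cong[where f="evalB a 1"], rule comp_decomp)
  also have "\<dots> = (\<Sum>k\<le>totdeg B. ev1 a (dehk k B))"
    by (simp add: evalB_sum evalB_HomF ev1_sum_bound[OF degree_dehk])
  finally show ?thesis .
qed

end

context kalg_inf
begin

lemma annB_sq: "annB B \<Longrightarrow> annB (substB [:0, l, l * l:] B)"
  by (simp add: annB_def flip: Ev_sq)

lemma evalB_ann_root:
  assumes "annB B" "\<forall>h\<in>Dset. ev1 \<zeta> h = 0"
  shows "evalB \<zeta> 1 B = 0"
proof -
  have "\<And>k. dehk k B \<in> Dset" using assms(1) unfolding Dset_def by blast
  then show ?thesis using assms(2) by (simp add: evalB_decomp)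
qed

lemma no_bad_root:
  assumes ann: "annB (HomF n hf)" and deg: "degree hf \<le> n" and nz: "hf \<noteq> 0"
    and z0: "\<zeta> \<noteq> 0" and z1: "\<zeta> \<noteq> 1" and roots: "\<forall>h\<in>Dset. ev1 \<zeta> h = 0"
  shows False
proof -
  define A where "A = UNIV - {0, -1 :: 'k}"
  have infA: "infinite A" unfolding A_def using inf by simp
  define a where "a l = iota l * \<zeta> * (1 + iota l * \<zeta>)" for l
  define b where "b l = iota l * (1 + iota l)" for l :: 'k
  define \<xi> where "\<xi> l = a l / b l" for l
  have ea: "ev1 \<zeta> [:0, l, l * l:] = a l" for l by (simp add: a_def algebra_simps)
  have eb: "ev1 1 [:0, l, l * l:] = b l" for l by (simp add: b_def algebra_simps)
  have bnz: "b l \<noteq> 0" if "l \<in> A" for l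
  proof -
    have "1 + iota l \<noteq> 0"
    proof
      assume "1 + iota l = 0"
      then have "iota (1 + l) = iota 0" by simp
      then have "1 + l = 0" by (rule iota_eq_iff[THEN iffD1])
      then have "l = -1" by (simp add: eq_neg_iff_add_eq_0 add.commute)
      then show False using that by (simp add: A_def)
    qed
    moreover have "iota l \<noteq> 0" using that by (simp add: A_def)
    ultimately show ?thesis by (simp add: b_def)
  qed
  have root: "ev1 (\<xi> l) hf = 0" if "l \<in> A" for l
  proof -
    have "evalB \<zeta> 1 (substB [:0, l, l * l:] (HomF n hf)) = 0"
      by (rule evalB_ann_root[OF annB_sq[OF ann] roots])
    then have "evalB (a l) (b l) (HomF n hf) = 0"
      unfolding evalB_substB ea eb .
    then have s0: "(\<Sum>i\<le>n. iota (coeff hf i) * a l ^ i * b l ^ (n - i)) = 0"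
      by (simp add: evalB_HomF)
    have "(\<Sum>i\<le>n. iota (coeff hf i) * a l ^ i * b l ^ (n - i)) = b l ^ n * ev1 (\<xi> l) hf"
    proof -
      have "b l ^ n * ev1 (\<xi> l) hf = (\<Sum>i\<le>n. b l ^ n * (iota (coeff hf i) * \<xi> l ^ i))"
        by (simp add: ev1_sum_bound[OF deg] sum_distrib_left)
      also have "\<dots> = (\<Sum>i\<le>n. iota (coeff hf i) * a l ^ i * b l ^ (n - i))"
      proof (rule sum.cong)
        fix i assume "i \<in> {..n}"
        then have "i \<le> n" by simp
        have "b l ^ n = b l ^ (n - i) * b l ^ i" using \<open>i \<le> n\<close> by (simp flip: power_add)
        then show "b l ^ n * (iota (coeff hf i) * \<xi> l ^ i) = iota (coeff hf i) * a l ^ i * b l ^ (n - i)"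
          using bnz[OF that] by (simp add: \<xi>_def power_divide field_simps)
      qed simp
      finally show ?thesis by simp
    qed
    with s0 show ?thesis using bnz[OF that] by simp
  qed
  have inj: "inj_on \<xi> A"
  proof (rule inj_onI)
    fix l m assume l: "l \<in> A" and m: "m \<in> A" and e: "\<xi> l = \<xi> m"
    then have "a l * b m = a m * b l"
      using bnz[OF l] bnz[OF m] by (simp add: \<xi>_def frac_eq_eq)
    moreover have "a l * b m - a m * b l = iota l * iota m * \<zeta> * (iota l - iota m) * (\<zeta> - 1)"
      by (simp add: a_def b_def algebra_simps)
    ultimately have "iota l * iota m * \<zeta> * (iota l - iota m) * (\<zeta> - 1) = 0" by simp
    moreover have "iota l \<noteq> 0" "iota m \<noteq> 0" using l m by (auto simp: A_def)
    ultimately have "iota l - iota m = 0" using z0 z1 by simp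
    then show "l = m" by simp
  qed
  have "\<xi> ` A \<subseteq> {x. poly (mpi hf) x = 0}"
    using root by (auto simp: ev1_def)
  moreover have "finite {x. poly (mpi hf) x = 0}"
    by (rule poly_roots_finite) (simp add: nz)
  ultimately have "finite (\<xi> ` A)" by (rule finite_subset)
  then have "finite A" using inj by (rule finite_imageD)
  then show False using infA by simp
qed

end

context kalg
begin

lemma HomF0_1: "HomF 0 1 = 1"
  by (simp add: HomF_def)

lemma HomF_X: "HomF 1 [:0, 1:] = Sv"
  using HomF_S[of 0 1] by (simp add: HomF0_1 pCons_one)

lemma HomF_Y: "HomF 1 [:-1, 1:] = Sv - Tv"
proof -
  have "[:-1, 1:] = [:-1:] + pCons 0 (1 :: 'k poly)" by simp
  then have "HomF 1 [:-1, 1:] = HomF 1 [:-1:] + HomF 1 (pCons 0 1)" by (simp only: HomF_add)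
  moreover have "HomF 1 (pCons 0 1) = Sv" using HomF_X by (simp flip: pCons_one)
  moreover have "HomF 1 [:-1:] = Tv * [:[:-1:]:]"
    using HomF_T[of "[:-1:]" 0] by (simp add: HomF_const0)
  moreover have "Tv * [:[:-1:]:] = - Tv"
  proof -
    have "[:[:-1:]:] = (- 1 :: 'k poly poly)" by (simp flip: pCons_one)
    then show ?thesis by simp
  qed
  ultimately show ?thesis by simp
qed

lemma HomF_Xpow: "HomF a ([:0, 1:] ^ a) = Sv ^ a"
proof (induct a)
  case 0
  then show ?case by (simp add: HomF0_1)
next
  case (Suc a)
  have h1: "HomF 1 [:0, 1:] = Sv" by (rule HomF_X)
  have "HomF (1 + a) ([:0, 1:] * [:0, 1:] ^ a) = HomF 1 [:0, 1:] * HomF a ([:0, 1:] ^ a)"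
    by (rule HomF_mult) (auto intro: order.trans[OF degree_power_le])
  then show ?case using Suc h1 by simp
qed

lemma HomF_Ypow: "HomF b ([:-1, 1:] ^ b) = (Sv - Tv) ^ b"
proof (induct b)
  case 0
  then show ?case by (simp add: HomF0_1)
next
  case (Suc b)
  have h1: "HomF 1 [:-1, 1:] = Sv - Tv" by (rule HomF_Y)
  have "HomF (1 + b) ([:-1, 1:] * [:-1, 1:] ^ b) = HomF 1 [:-1, 1:] * HomF b ([:-1, 1:] ^ b)"
    by (rule HomF_mult) (auto intro: order.trans[OF degree_power_le])
  then show ?case using Suc h1 by simp
qed

end

lemma ring_rearr:
  fixes S T U N :: "'a::comm_ring_1"
  assumes e1: "S ^ m = S ^ (m - a) * S ^ a" and e2: "T ^ m = T ^ (m - r) * T ^ r"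
   and e3: "U ^ m = U ^ (m - b) * U ^ b" and e4: "N ^ m = (- 1) ^ m * U ^ m"
  shows "S ^ m * T ^ m * N ^ m =
    ((- 1) ^ m * S ^ (m - a) * T ^ (m - r) * U ^ (m - b)) * (T ^ r * (S ^ a * U ^ b))"
  apply (subst e4)
  apply (subst e3)
  apply (subst e2)
  apply (subst e1)
  apply (simp only: mult_ac)
  done

context kalg_inf
begin

lemma main_annB:
  assumes ann: "annB (HomF n hf)" and deg: "degree hf \<le> n" and nz: "hf \<noteq> 0"
  shows "\<exists>m\<ge>1. annB (Sv ^ m * Tv ^ m * (Tv - Sv) ^ m)"
proof -
  have "hf = dehk n (HomF n hf)" using dehk_HomF[OF deg] by simp
  then have hfD: "hf \<in> Dset" unfolding Dset_def using ann by blast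
  have "\<exists>d. (d \<in> Dset \<and> d \<noteq> 0) \<and> (\<forall>y. y \<in> Dset \<and> y \<noteq> 0 \<longrightarrow> degree d \<le> degree y)"
    by (rule ex_has_least_nat) (use hfD nz in simp)
  then obtain d where dD: "d \<in> Dset \<and> d \<noteq> 0" and dmin: "\<forall>y. y \<in> Dset \<and> y \<noteq> 0 \<longrightarrow> degree d \<le> degree y"
    by blast
  have dnz: "d \<noteq> 0" using dD by simp
  have div: "\<exists>c q. c \<noteq> 0 \<and> smult c h = d * q" if hD: "h \<in> Dset" for h
  proof -
    obtain q r where pd: "pseudo_divmod h d = (q, r)" by (cases "pseudo_divmod h d") auto
    define c where "c = coeff d (degree d) ^ (Suc (degree h) - degree d)"
    have e: "smult c h = d * q + r" and rr: "r = 0 \<or> degree r < degree d"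
      using pseudo_divmod[OF dnz pd] unfolding c_def by blast+
    have "r = smult c h - q * d" using e by (simp add: algebra_simps)
    moreover have "smult c h - q * d \<in> Dset"
      using Dset_diff[OF Dset_smult[OF hD] Dset_mult[OF conjunct1[OF dD]]] by blast
    ultimately have "r \<in> Dset" by simp
    then have "r = 0" using rr dmin by (meson leD)
    moreover have "c \<noteq> 0" using dnz by (simp add: c_def)
    ultimately show ?thesis using e by auto
  qed
  have roots01: "x = 0 \<or> x = 1" if "poly (mpi d) x = 0" for x
  proof (rule ccontr)
    assume xn: "\<not> (x = 0 \<or> x = 1)"
    have "\<forall>h\<in>Dset. ev1 x h = 0"
    proof
      fix h assume "h \<in> Dset"
      then obtain c q where cq: "c \<noteq> 0" "smult c h = d * q" using div by blast
      have "iota c * ev1 x h = ev1 x d * ev1 x q"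
        using arg_cong[OF cq(2), of "ev1 x"] by simp
      also have "\<dots> = 0" using that by (simp add: ev1_def)
      finally show "ev1 x h = 0" using cq(1) by simp
    qed
    then show False using no_bad_root[OF ann deg nz] xn by blast
  qed
  obtain a b where ab: "mpi d = smult (lead_coeff (mpi d)) ([:0, 1:] ^ a * [:-1, 1:] ^ b)"
    using alg_closed_01[of "mpi d"] roots01 dnz by auto
  define P :: "'k poly" where "P = [:0, 1:] ^ a * [:-1, 1:] ^ b"
  define c where "c = lead_coeff d"
  have cnz: "c \<noteq> 0" using dnz by (simp add: c_def)
  have "mpi d = mpi (smult c P)"
    using ab by (simp add: P_def c_def)
  then have dP: "d = smult c P" by (rule mpi_inj)
  obtain B k where Bk: "annB B" "d = dehk k B" using dD unfolding Dset_def by blast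
  have degP: "degree P = a + b"
    unfolding P_def by (subst degree_mult_eq) (simp_all add: degree_power_eq)
  have "degree d = a + b" using dP cnz degP by simp
  then have abk: "a + b \<le> k" using degree_dehk[of k B] Bk by simp
  have "annB (HomF k d)" using annB_comp[OF Bk(1)] Bk(2) by simp
  then have "annB (smult [:c:] (HomF k P))" by (simp add: dP HomF_smult)
  then have annP: "annB (HomF k P)"
    unfolding annB_def using cnz by (auto simp: Ev_smult Ev1_const dest: tf_cancel)
  define r where "r = k - (a + b)"
  have "HomF k P = HomF ((a + b) + r) P" using abk by (simp add: r_def)
  also have "\<dots> = Tv ^ r * HomF (a + b) P" using degP by (intro HomF_Tpow) simp
  also have "HomF (a + b) P = HomF a ([:0, 1:] ^ a) * HomF b ([:-1, 1:] ^ b)"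
    unfolding P_def by (rule HomF_mult) (auto intro: order.trans[OF degree_power_le])
  finally have "HomF k P = Tv ^ r * (Sv ^ a * (Sv - Tv) ^ b)"
    by (simp add: HomF_Xpow HomF_Ypow)
  with annP have ann2: "annB (Tv ^ r * (Sv ^ a * (Sv - Tv) ^ b))" by simp
  define m where "m = Suc k"
  have am: "a \<le> m" "b \<le> m" "r \<le> m" using abk by (auto simp: m_def r_def)
  have e1: "Sv ^ m = Sv ^ (m - a) * Sv ^ a" using am by (simp flip: power_add)
  have e2: "Tv ^ m = Tv ^ (m - r) * Tv ^ r" using am by (simp flip: power_add)
  have e3: "(Sv - Tv) ^ m = (Sv - Tv) ^ (m - b) * (Sv - Tv) ^ b" using am by (simp flip: power_add)
  have "Tv - Sv = (- 1) * (Sv - Tv)" by simp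
  then have e4: "(Tv - Sv) ^ m = (- 1) ^ m * (Sv - Tv) ^ m"
    by (simp only: power_mult_distrib)
  have "Sv ^ m * Tv ^ m * (Tv - Sv) ^ m =
    ((- 1) ^ m * Sv ^ (m - a) * Tv ^ (m - r) * (Sv - Tv) ^ (m - b)) * (Tv ^ r * (Sv ^ a * (Sv - Tv) ^ b))"
    by (rule ring_rearr[OF e1 e2 e3 e4])
  moreover have "annB (((- 1) ^ m * Sv ^ (m - a) * Tv ^ (m - r) * (Sv - Tv) ^ (m - b)) * (Tv ^ r * (Sv ^ a * (Sv - Tv) ^ b)))"
    by (rule annB_mult[OF ann2])
  ultimately have "annB (Sv ^ m * Tv ^ m * (Tv - Sv) ^ m)"
    by (simp only:)
  moreover have "m \<ge> 1" by (simp add: m_def)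
  ultimately show ?thesis by blast
qed

end

fun lin :: "nat \<Rightarrow> nat \<Rightarrow> 'r::ring \<Rightarrow> 'r \<Rightarrow> nat list \<Rightarrow> 'r" where
  "lin j k x y [] = 0"
| "lin j k x y [i] = (if k = 0 then y else if k = 1 \<and> i = j then x else 0)"
| "lin j k x y (i # i' # w) = y * lin j k x y (i' # w) +
     (if i = j \<and> k > 0 then x * lin j (k - 1) x y (i' # w) else 0)"

lemma lin_zero_big: "length u < k \<Longrightarrow> lin j k x y u = 0"
proof (induct j k x y u rule: lin.induct)
  case (3 j k x y i i' w)
  then show ?case by auto
qed auto

fun pp :: "nat \<Rightarrow> nat list \<Rightarrow> 'k::idom poly" where
  "pp j [] = 0"
| "pp j (i # w) = pCons (if i = j then 1 else 0) (pp j w)"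

lemma coeff_pp: "coeff (pp j u) i = (if i < length u \<and> u ! i = j then 1 else 0)"
  by (induct u arbitrary: i) (auto simp: coeff_pCons split: nat.split)

lemma degree_pp: "degree (pp j u) \<le> length u - 1"
  by (rule degree_le) (auto simp: coeff_pp)

lemma weval_Cons: "w \<noteq> [] \<Longrightarrow> weval f (i # w) = f i * weval f w"
  by (cases w) auto

definition ypw :: "'r::ring \<Rightarrow> nat \<Rightarrow> 'r" where
  "ypw y b = weval (\<lambda>_. y) (replicate (Suc b) 0)"

lemma ypw_0: "ypw y 0 = y" by (simp add: ypw_def)
lemma ypw_Suc: "ypw y (Suc b) = y * ypw y b" by (simp add: ypw_def)

lemma ypw_comm: "ypw y b * y = y * ypw y b"
  by (induct b) (simp_all add: ypw_0 ypw_Suc mult.assoc)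

lemma rpow_ypw: "rpow y (Suc b) x = x * ypw y b"
proof (induct b)
  case 0
  then show ?case by (simp add: rpow_def ypw_0)
next
  case (Suc b)
  have "rpow y (Suc (Suc b)) x = rpow y (Suc b) x * y" by (simp add: rpow_def)
  then show ?case using Suc by (simp add: ypw_Suc mult.assoc ypw_comm)
qed

lemma lin0: "u \<noteq> [] \<Longrightarrow> lin j 0 x y u = ypw y (length u - 1)"
proof (induct j "0::nat" x y u rule: lin.induct)
  case (2 j x y i)
  then show ?case by (simp add: ypw_0)
next
  case (3 j x y i i' w)
  then show ?case by (simp add: ypw_Suc)
qed auto

lemma smult_one_const: "smult [:1:] (p :: 'a::comm_ring_1 poly poly) = p"
  by (simp add: pCons_one)

context kalg
begin

lemma lin1_Ev: "u \<noteq> [] \<Longrightarrow> lin j 1 x y u = Ev y (HomF (length u - 1) (pp j u)) x"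
proof (induct u)
  case Nil
  then show ?case by simp
next
  case (Cons i w)
  show ?case
  proof (cases w)
    case Nil
    then show ?thesis
      by (simp add: HomF_const0 Ev_C flip: pCons_one)
  next
    case (Cons i' w')
    let ?n = "length w'"
    have dw: "degree (pp j w) \<le> ?n" using degree_pp[of j w] Cons by simp
    have eq: "pp j (i # w) = [:(if i = j then 1 else 0):] + pCons 0 (pp j w)" by simp
    have "HomF (Suc ?n) (pp j (i # w)) = HomF (Suc ?n) [:(if i = j then 1 else 0):] + Sv * HomF ?n (pp j w)"
      unfolding eq HomF_add HomF_S ..
    also have "HomF (Suc ?n) [:(if i = j then 1 else 0):] = Tv ^ Suc ?n * [:[:(if i = j then 1 else 0):]:]"
      using HomF_Tpow[of "[:(if i = j then 1 else 0):]" 0 "Suc ?n"] by (simp add: HomF_const0)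
    finally have H: "HomF (Suc ?n) (pp j (i # w)) = Tv ^ Suc ?n * [:[:(if i = j then 1 else 0):]:] + Sv * HomF ?n (pp j w)" .
    have "Ev y (HomF (Suc ?n) (pp j (i # w))) x = rpow y (Suc ?n) (sc (if i = j then 1 else 0) x) + y * Ev y (HomF ?n (pp j w)) x"
      unfolding H by (simp add: Ev_add Ev_mult Ev_C Ev_Sv rpow_Ev Tv_def smult_one_const)
    moreover have "lin j 1 x y (i # w) = y * lin j 1 x y w + (if i = j then x * ypw y ?n else 0)"
      using Cons by (simp add: lin0)
    moreover have "lin j 1 x y w = Ev y (HomF ?n (pp j w)) x" using Cons.hyps Cons by simp
    ultimately show ?thesis using Cons by (simp add: rpow_ypw)
  qed
qed

definition fl :: "nat \<Rightarrow> 'r \<Rightarrow> 'r \<Rightarrow> 'k \<Rightarrow> nat \<Rightarrow> 'r" where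
  "fl j x y l = (\<lambda>i. if i = j then y + sc l x else y)"

lemma weval_lin: "u \<noteq> [] \<Longrightarrow> weval (fl j x y l) u = (\<Sum>k\<le>length u. sc (l ^ k) (lin j k x y u))"
proof (induct u)
  case Nil
  then show ?case by simp
next
  case (Cons i w)
  show ?case
  proof (cases w)
    case Nil
    then show ?thesis by (simp add: fl_def)
  next
    case (Cons i' w')
    let ?L = "length w"
    have IH: "weval (fl j x y l) w = (\<Sum>k\<le>?L. sc (l ^ k) (lin j k x y w))"
      using Cons.hyps Cons by simp
    have z: "lin j (Suc ?L) x y w = 0" by (rule lin_zero_big) simp
    have lw: "lin j k x y (i # w) = y * lin j k x y w + (if i = j \<and> k > 0 then x * lin j (k - 1) x y w else 0)" for k
      using Cons by simp
    have "(\<Sum>k\<le>Suc ?L. sc (l ^ k) (lin j k x y (i # w))) =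
      (\<Sum>k\<le>Suc ?L. sc (l ^ k) (y * lin j k x y w)) +
      (\<Sum>k\<le>Suc ?L. sc (l ^ k) (if i = j \<and> k > 0 then x * lin j (k - 1) x y w else 0))"
      by (simp only: lw scale_right_distrib sum.distrib)
    also have "(\<Sum>k\<le>Suc ?L. sc (l ^ k) (y * lin j k x y w)) = y * weval (fl j x y l) w"
      using z by (simp add: IH sum_distrib_left sc_mult_right)
    also have "(\<Sum>k\<le>Suc ?L. sc (l ^ k) (if i = j \<and> k > 0 then x * lin j (k - 1) x y w else 0)) =
        (if i = j then sc l x * weval (fl j x y l) w else 0)"
    proof (cases "i = j")
      case True
      have "(\<Sum>k\<le>Suc ?L. sc (l ^ k) (if i = j \<and> k > 0 then x * lin j (k - 1) x y w else 0)) =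
          (\<Sum>k\<le>?L. sc (l ^ Suc k) (x * lin j k x y w))"
        using True by (subst sum.atMost_Suc_shift) simp
      also have "\<dots> = sc l x * weval (fl j x y l) w"
      proof -
        have "sc (l ^ Suc k) (x * z) = sc l x * sc (l ^ k) z" for k z
          by (simp add: sc_mult_right flip: sc_mult_left)
        then show ?thesis by (simp only: IH sum_distrib_left)
      qed
      finally show ?thesis using True by simp
    qed simp
    finally show ?thesis using Cons
      by (simp add: weval_Cons fl_def distrib_right)
  qed
qed

end

context kalg_inf
begin

lemma sum_lin_ext:
  "length u \<le> N \<Longrightarrow> (\<Sum>k\<le>N. sc (l ^ k) (lin j k x y u)) = (\<Sum>k\<le>length u. sc (l ^ k) (lin j k x y u))"
  by (rule sum.mono_neutral_right) (auto simp: lin_zero_big)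

lemma lin_coeff1:
  assumes u1: "u1 \<noteq> []" and u2: "u2 \<noteq> []"
    and H: "\<forall>f. sc a1 (weval f u1) + sc a2 (weval f u2) = 0"
  shows "sc a1 (lin j 1 x y u1) + sc a2 (lin j 1 x y u2) = 0"
proof -
  define N where "N = length u1 + length u2"
  define c where "c k = sc a1 (lin j k x y u1) + sc a2 (lin j k x y u2)" for k
  have "\<forall>l\<in>UNIV. (\<Sum>k\<le>N. sc (l ^ k) (c k)) = 0"
  proof
    fix l :: 'k
    have "(\<Sum>k\<le>N. sc (l ^ k) (c k)) =
      sc a1 (\<Sum>k\<le>N. sc (l ^ k) (lin j k x y u1)) + sc a2 (\<Sum>k\<le>N. sc (l ^ k) (lin j k x y u2))"
      by (simp add: c_def scale_sum_right sum.distrib scale_right_distrib mult.commute)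
    also have "\<dots> = sc a1 (weval (fl j x y l) u1) + sc a2 (weval (fl j x y l) u2)"
      using sum_lin_ext[where u=u1 and N=N and l=l and j=j and x=x and y=y]
        sum_lin_ext[where u=u2 and N=N and l=l and j=j and x=x and y=y]
        weval_lin[OF u1, of j x y l] weval_lin[OF u2, of j x y l]
      by (simp add: N_def)
    also have "\<dots> = 0" using H by blast
    finally show "(\<Sum>k\<le>N. sc (l ^ k) (c k)) = 0" .
  qed
  moreover have "1 \<le> N" using u1 by (simp add: N_def Suc_le_eq)
  ultimately have "c 1 = 0" by (rule vander_gen[OF inf])
  then show ?thesis by (simp add: c_def)
qed

end

lemma weval_word: "weval (f :: nat \<Rightarrow> 'r::ring) (replicate a 1 @ 0 # replicate b 1) = lpow (f 1) a (rpow (f 1) b (f 0))"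
proof (induct a)
  case 0
  show ?case
  proof (cases b)
    case 0
    then show ?thesis by (simp add: lpow_def rpow_def)
  next
    case (Suc b')
    have w: "weval f (replicate (Suc b') 1) = ypw (f 1) b'"
      by (induct b') (simp_all add: ypw_def weval_Cons)
    have "weval f (0 # replicate (Suc b') 1) = f 0 * weval f (replicate (Suc b') 1)"
      by (rule weval_Cons) simp
    then show ?thesis using Suc w by (simp add: lpow_def rpow_ypw)
  qed
next
  case (Suc a)
  then show ?case by (simp add: lpow_def weval_Cons)
qed

lemma word_neq:
  assumes "q \<ge> 1"
  shows "replicate q (1::nat) @ 0 # replicate (2 * q) 1 \<noteq> replicate (2 * q) 1 @ 0 # replicate q 1"
proof
  assume e: "replicate q (1::nat) @ 0 # replicate (2 * q) 1 = replicate (2 * q) 1 @ 0 # replicate q 1"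
  have "(replicate q (1::nat) @ 0 # replicate (2 * q) 1) ! q = 0" by (simp add: nth_append)
  moreover have "(replicate (2 * q) (1::nat) @ 0 # replicate q 1) ! q = 1"
    using assms by (simp add: nth_append)
  ultimately show False using e by simp
qed

context kalg
begin

lemma Ev_SvTv: "Ev y (Sv ^ a * Tv ^ b) x = lpow y a (rpow y b x)"
  by (simp add: Ev_mult lpow_Ev rpow_Ev Sv_def Tv_def)

lemma P4_Ev: "lpow y m (rpow y m (ecomm x y m)) = Ev y (Sv ^ m * Tv ^ m * (Tv - Sv) ^ m) x"
  by (simp add: Ev_mult lpow_Ev rpow_Ev Sv_def Tv_def ecomm_Ev)

lemma P1_P2: "satisfies_semigroup_identity TYPE('r) \<Longrightarrow> satisfies_binomial_identity sc"
  unfolding satisfies_semigroup_identity_def satisfies_binomial_identity_def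
  apply (elim exE conjE)
  subgoal for u v
    apply (rule exI[of _ 1], rule exI[of _ "-1"], rule exI[of _ u], rule exI[of _ v])
    apply simp
    done
  done

lemma pow_split3:
  fixes S T N :: "'a::comm_ring_1"
  assumes "m \<le> q"
  shows "S ^ q * T ^ q * N ^ q = (S ^ (q - m) * T ^ (q - m) * N ^ (q - m)) * (S ^ m * T ^ m * N ^ m)"
proof -
  obtain j where q: "q = j + m" using assms le_iff_add by (metis add.commute)
  show ?thesis unfolding q by (simp add: power_add mult_ac)
qed

lemma P4_P1:
  assumes ch: "CHAR('k) > 0" and m1: "m \<ge> 1"
    and P4: "\<forall>x y. lpow y m (rpow y m (ecomm x y m)) = (0::'r)"
  shows "satisfies_semigroup_identity TYPE('r)"
proof -
  define p where "p = CHAR('k)"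
  have pp: "prime p" unfolding p_def using ch by (rule prime_CHAR_semidom)
  define q where "q = p ^ m"
  have "m < 2 ^ m" by (rule less_exp)
  also have "2 ^ m \<le> q" unfolding q_def using prime_ge_2_nat[OF pp] by (simp add: power_mono)
  finally have mq: "m \<le> q" by simp
  have q1: "q \<ge> 1" using mq m1 by simp
  have a1: "annB (Sv ^ m * Tv ^ m * (Tv - Sv) ^ m)"
    using P4 by (simp add: annB_def P4_Ev)
  have "annB ((Sv ^ (q - m) * Tv ^ (q - m) * (Tv - Sv) ^ (q - m)) * (Sv ^ m * Tv ^ m * (Tv - Sv) ^ m))"
    by (rule annB_mult[OF a1])
  then have a2: "annB (Sv ^ q * Tv ^ q * (Tv - Sv) ^ q)"
    by (simp only: pow_split3[OF mq])
  have chp: "prime CHAR('k poly poly)" using pp by (simp add: p_def)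
  have "((Tv - Sv) + Sv) ^ q = (Tv - Sv) ^ q + Sv ^ q"
    by (rule freshmans_dream'[OF chp]) (simp add: q_def p_def)
  then have fd: "(Tv - Sv) ^ q = Tv ^ q - Sv ^ q" by (simp add: algebra_simps)
  have eqw: "lpow y q (rpow y (2 * q) x) = lpow y (2 * q) (rpow y q x)" for x y :: 'r
  proof -
    have "Ev y (Sv ^ q * Tv ^ q * (Tv ^ q - Sv ^ q)) x = 0" using a2 fd by (simp add: annB_def)
    moreover have "Sv ^ q * Tv ^ q * (Tv ^ q - Sv ^ q) = Sv ^ q * Tv ^ (2 * q) - Sv ^ (2 * q) * Tv ^ q"
      by (simp add: right_diff_distrib mult_2 mult_2_right power_add mult_ac)
    ultimately show ?thesis by (simp add: Ev_diff Ev_SvTv)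
  qed
  show ?thesis
    unfolding satisfies_semigroup_identity_def
  proof (intro exI conjI allI)
    show "replicate q 1 @ 0 # replicate (2 * q) 1 \<noteq> []" by simp
    show "replicate (2 * q) 1 @ 0 # replicate q 1 \<noteq> []" by simp
    show "replicate q (1::nat) @ 0 # replicate (2 * q) 1 \<noteq> replicate (2 * q) 1 @ 0 # replicate q 1"
      using q1 by (rule word_neq)
    fix f :: "nat \<Rightarrow> 'r"
    show "weval f (replicate q 1 @ 0 # replicate (2 * q) 1) = weval f (replicate (2 * q) 1 @ 0 # replicate q 1)"
      unfolding weval_word by (rule eqw)
  qed
qed

end

context kalg_inf
begin

lemma P3_P4:
  assumes nz: "\<exists>i\<le>n. \<alpha> i \<noteq> 0"
    and P3: "\<forall>x y :: 'r. (\<Sum>i\<le>n. sc (\<alpha> i) (lpow y i (rpow y (n - i) x))) = 0"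
  shows "\<exists>m::nat. m \<ge> 1 \<and> (\<forall>x y :: 'r. lpow y m (rpow y m (ecomm x y m)) = 0)"
proof -
  define hf where "hf = (\<Sum>i\<le>n. monom (\<alpha> i) i)"
  have chf: "coeff hf i = (if i \<le> n then \<alpha> i else 0)" for i
    by (simp add: hf_def coeff_sum coeff_monom)
  have deg: "degree hf \<le> n" by (rule degree_le) (simp add: chf)
  have hnz: "hf \<noteq> 0" using nz chf by (metis coeff_0)
  have "annB (HomF n hf)"
    using P3 by (simp add: annB_def Ev_HomF chf)
  then obtain m where "m \<ge> 1" "annB (Sv ^ m * Tv ^ m * (Tv - Sv) ^ m)"
    using main_annB[OF _ deg hnz] by blast
  then show ?thesis by (auto simp: annB_def P4_Ev)
qed

end

context kalg
begin

lemma lpow_sc_z: "lpow y i (sc c z) = sc c (lpow y i z)"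
  by (induct i) (simp_all add: lpow_def sc_mult_right)

lemma rpow_sc_z: "rpow y i (sc c z) = sc c (rpow y i z)"
  by (induct i) (simp_all add: rpow_def sc_mult_left)

lemma lpow_sc_y: "lpow (sc \<mu> y) i z = sc (\<mu> ^ i) (lpow y i z)"
  by (induct i) (simp_all add: lpow_def sc_mult_right mult.commute flip: sc_mult_left)

lemma rpow_sc_y: "rpow (sc \<mu> y) i z = sc (\<mu> ^ i) (rpow y i z)"
  by (induct i) (simp_all add: rpow_def sc_mult_left mult.commute flip: sc_mult_right)

lemma Ev_HomF_scale: "Ev (sc \<mu> y) (HomF n h) x = sc (\<mu> ^ n) (Ev y (HomF n h) x)"
proof -
  have "Ev (sc \<mu> y) (HomF n h) x = (\<Sum>i\<le>n. sc (\<mu> ^ n) (sc (coeff h i) (lpow y i (rpow y (n - i) x))))"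
    unfolding Ev_HomF
  proof (rule sum.cong)
    fix i assume "i \<in> {..n}"
    then have "\<mu> ^ i * \<mu> ^ (n - i) = \<mu> ^ n" by (simp flip: power_add)
    then show "sc (coeff h i) (lpow (sc \<mu> y) i (rpow (sc \<mu> y) (n - i) x)) =
        sc (\<mu> ^ n) (sc (coeff h i) (lpow y i (rpow y (n - i) x)))"
      by (simp add: lpow_sc_y rpow_sc_y lpow_sc_z mult_ac)
  qed simp
  then show ?thesis by (simp add: Ev_HomF scale_sum_right)
qed

lemma P3_of_HomF:
  assumes "\<forall>x y. Ev y (HomF n h) x = 0" "h \<noteq> 0" "degree h \<le> n"
  shows "\<exists>(n::nat) (\<alpha>::nat \<Rightarrow> 'k). (\<exists>i\<le>n. \<alpha> i \<noteq> 0) \<and>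
               (\<forall>x y :: 'r. (\<Sum>i\<le>n. sc (\<alpha> i) (lpow y i (rpow y (n - i) x))) = 0)"
proof -
  have "\<exists>i\<le>n. coeff h i \<noteq> 0" using assms(2,3) by (intro exI[of _ "degree h"]) simp
  moreover have "\<forall>x y :: 'r. (\<Sum>i\<le>n. sc (coeff h i) (lpow y i (rpow y (n - i) x))) = 0"
    using assms(1) by (simp add: Ev_HomF)
  ultimately show ?thesis by blast
qed

lemma Ev_comb: "Ev y (HomF n (smult a1 p1 + smult a2 p2)) x = sc a1 (Ev y (HomF n p1) x) + sc a2 (Ev y (HomF n p2) x)"
  by (simp add: HomF_add HomF_smult Ev_add Ev_smult Ev1_const)

lemma pp_ne0: "u \<noteq> [] \<Longrightarrow> pp (u ! 0) u \<noteq> (0 :: 'k poly)"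
  by (metis coeff_0 coeff_pp length_greater_0_conv one_neq_zero)

end

context kalg_inf
begin

lemma P2_P3:
  assumes "satisfies_binomial_identity sc"
  shows "\<exists>(n::nat) (\<alpha>::nat \<Rightarrow> 'k). (\<exists>i\<le>n. \<alpha> i \<noteq> 0) \<and>
               (\<forall>x y :: 'r. (\<Sum>i\<le>n. sc (\<alpha> i) (lpow y i (rpow y (n - i) x))) = 0)"
proof -
  obtain a1 a2 u1 u2 where u1: "u1 \<noteq> []" and u2: "u2 \<noteq> []"
    and nt: "if u1 = u2 then a1 + a2 \<noteq> 0 else a1 \<noteq> 0 \<or> a2 \<noteq> 0"
    and H: "\<forall>f :: nat \<Rightarrow> 'r. sc a1 (weval f u1) + sc a2 (weval f u2) = 0"
    using assms unfolding satisfies_binomial_identity_def by blast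
  define n1 where "n1 = length u1 - 1"
  define n2 where "n2 = length u2 - 1"
  have G: "sc a1 (Ev y (HomF n1 (pp j u1)) x) + sc a2 (Ev y (HomF n2 (pp j u2)) x) = 0" for j x y
    using lin_coeff1[OF u1 u2 H, of j x y] lin1_Ev[OF u1, of j x y] lin1_Ev[OF u2, of j x y]
    by (simp add: n1_def n2_def)
  have d1: "degree (pp j u1 :: 'k poly) \<le> n1" for j using degree_pp[of j u1] by (simp add: n1_def)
  have d2: "degree (pp j u2 :: 'k poly) \<le> n2" for j using degree_pp[of j u2] by (simp add: n2_def)
  show ?thesis
  proof (cases "n1 = n2")
    case True
    have ex: "\<exists>j. smult a1 (pp j u1) + smult a2 (pp j u2) \<noteq> (0 :: 'k poly)"
    proof (cases "u1 = u2")
      case True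
      then have "a1 + a2 \<noteq> 0" using nt by simp
      then show ?thesis using True pp_ne0[OF u1]
        by (intro exI[of _ "u1 ! 0"]) (simp flip: smult_add_left)
    next
      case False
      have "0 < length u1" "0 < length u2" using u1 u2 by auto
      then have len: "length u1 = length u2" using True unfolding n1_def n2_def by arith
      then obtain i where i: "i < length u1" "u1 ! i \<noteq> u2 ! i"
        using False nth_equalityI by blast
      have "a1 \<noteq> 0 \<or> a2 \<noteq> 0" using nt False by simp
      then show ?thesis
      proof
        assume "a1 \<noteq> 0"
        then have "coeff (smult a1 (pp (u1 ! i) u1) + smult a2 (pp (u1 ! i) u2)) i \<noteq> (0 :: 'k)"
          using i len by (simp add: coeff_pp)
        then show ?thesis by (metis coeff_0)
      next
        assume a2: "a2 \<noteq> 0"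
        show ?thesis
        proof (cases "a1 = 0")
          case True
          then have "coeff (smult a1 (pp (u2 ! i) u1) + smult a2 (pp (u2 ! i) u2)) i \<noteq> (0 :: 'k)"
            using i len a2 by (simp add: coeff_pp)
          then show ?thesis by (metis coeff_0)
        next
          case False
          then have "coeff (smult a1 (pp (u1 ! i) u1) + smult a2 (pp (u1 ! i) u2)) i \<noteq> (0 :: 'k)"
            using i len by (simp add: coeff_pp)
          then show ?thesis by (metis coeff_0)
        qed
      qed
    qed
    then obtain j where hj: "smult a1 (pp j u1) + smult a2 (pp j u2) \<noteq> (0 :: 'k poly)" by blast
    have "\<forall>x y. Ev y (HomF n1 (smult a1 (pp j u1) + smult a2 (pp j u2))) x = 0"
      using G[where j=j] True by (simp add: Ev_comb)
    moreover have "degree (smult a1 (pp j u1) + smult a2 (pp j u2)) \<le> n1"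
      using d1[of j] d2[of j] True
      by (intro degree_add_le) (auto intro: order.trans[OF degree_smult_le])
    ultimately show ?thesis using P3_of_HomF hj by blast
  next
    case False
    have ne: "a1 \<noteq> 0 \<or> a2 \<noteq> 0"
    proof -
      have "u1 \<noteq> u2" using False by (auto simp: n1_def n2_def)
      then show ?thesis using nt by simp
    qed
    define j where "j = (if a1 \<noteq> 0 then u1 ! 0 else u2 ! 0)"
    have AB: "sc a1 (Ev y (HomF n1 (pp j u1)) x) = 0 \<and> sc a2 (Ev y (HomF n2 (pp j u2)) x) = 0" for x y
    proof -
      define A where "A = sc a1 (Ev y (HomF n1 (pp j u1)) x)"
      define B where "B = sc a2 (Ev y (HomF n2 (pp j u2)) x)"
      define c where "c k = (if k = n1 then A else 0) + (if k = n2 then B else 0)" for k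
      have "\<forall>\<mu>\<in>UNIV. (\<Sum>k\<le>n1 + n2. sc (\<mu> ^ k) (c k)) = 0"
      proof
        fix \<mu> :: 'k
        have t: "sc (\<mu> ^ k) (c k) = (if k = n1 then sc (\<mu> ^ n1) A else 0) + (if k = n2 then sc (\<mu> ^ n2) B else 0)" for k
          by (simp add: c_def scale_right_distrib)
        have "(\<Sum>k\<le>n1 + n2. sc (\<mu> ^ k) (c k)) = sc (\<mu> ^ n1) A + sc (\<mu> ^ n2) B"
          by (simp only: t sum.distrib) (simp add: sum.delta)
        also have "\<dots> = sc a1 (Ev (sc \<mu> y) (HomF n1 (pp j u1)) x) + sc a2 (Ev (sc \<mu> y) (HomF n2 (pp j u2)) x)"
          by (simp add: A_def B_def Ev_HomF_scale mult.commute)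
        also have "\<dots> = 0" by (rule G)
        finally show "(\<Sum>k\<le>n1 + n2. sc (\<mu> ^ k) (c k)) = 0" .
      qed
      then have "c n1 = 0" "c n2 = 0" by (auto intro: vander_gen[OF inf])
      then show ?thesis using False by (simp add: c_def A_def B_def)
    qed
    show ?thesis
    proof (cases "a1 \<noteq> 0")
      case True
      then have "\<forall>x y. Ev y (HomF n1 (pp j u1)) x = 0" using AB tf_cancel by blast
      moreover have "pp j u1 \<noteq> (0 :: 'k poly)" using True pp_ne0[OF u1] by (simp add: j_def)
      ultimately show ?thesis using d1 by (intro P3_of_HomF) auto
    next
      case False
      then have "a2 \<noteq> 0" using ne by simp
      then have "\<forall>x y. Ev y (HomF n2 (pp j u2)) x = 0" using AB tf_cancel by blast
      moreover have "pp j u2 \<noteq> (0 :: 'k poly)" using False pp_ne0[OF u2] by (simp add: j_def)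
      ultimately show ?thesis using d2 by (intro P3_of_HomF) auto
    qed
  qed
qed

end

theorem theorem1p3:
  fixes sc :: "'k::idom \<Rightarrow> 'r::ring \<Rightarrow> 'r"
  assumes "infinite (UNIV :: 'k set)"
    and "CHAR('k) > 0"
    and "k_algebra sc"
    and "torsion_free_action sc"
  defines "P1 \<equiv> satisfies_semigroup_identity TYPE('r)"
    and "P2 \<equiv> satisfies_binomial_identity sc"
    and "P3 \<equiv> (\<exists>(n::nat) (\<alpha>::nat \<Rightarrow> 'k). (\<exists>i\<le>n. \<alpha> i \<noteq> 0) \<and>
               (\<forall>x y :: 'r. (\<Sum>i\<le>n. sc (\<alpha> i) (lpow y i (rpow y (n - i) x))) = 0))"
    and "P4 \<equiv> (\<exists>m::nat. m \<ge> 1 \<and>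
               (\<forall>x y :: 'r. lpow y m (rpow y m (ecomm x y m)) = 0))"
  shows "(P1 \<longleftrightarrow> P2) \<and> (P2 \<longleftrightarrow> P3) \<and> (P3 \<longleftrightarrow> P4)"
proof -
  interpret kalg_inf sc
    by unfold_locales (use assms(1,3,4) in auto)
  have i12: "P1 \<Longrightarrow> P2" unfolding P1_def P2_def by (rule P1_P2)
  have i23: "P2 \<Longrightarrow> P3" unfolding P2_def P3_def by (rule P2_P3)
  have i34: "P3 \<Longrightarrow> P4" unfolding P3_def P4_def using P3_P4 by blast
  have i41: "P4 \<Longrightarrow> P1" unfolding P4_def P1_def using P4_P1[OF assms(2)] by blast
  show ?thesis using i12 i23 i34 i41 by blast
qed

end
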